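(* In the setting of the 2-node sliced contraction (all $m_i=2$) with all sliced index dimensions equal, $L_i=L>2$ for $i=1,\dots,n$, the $f$-resilient number $f+2L^n-1$ is achievable (via the encoding $\tilde A^{(i,1)}(x)=\sum_{s=1}^{L}A^{(i,1)}_{s}x^{(s-1)L^{i-1}}$, $\tilde A^{(i,2)}(x)=\sum_{s=1}^{L}A^{(i,2)}_{s}x^{(L-s)L^{i-1}}$, each worker evaluating $\Phi$ on the encoded tensors at its own distinct point $x$), and the gain compared to naive replication is $\Delta=(L^n-1)(f-1)$.
   Context: Setting (sliced parallel tensor network contraction). A tensor network is contracted in parallel by "slicing" $n$ of its closed indices: index $i$ has dimension $L_i$ and is shared by $m_i$ tensors (an "$m_i$-node index"), and the sliced indices are pairwise non-adjacent, i.e. no tensor carries two sliced indices. Fixing the value $s_i\in\{1,\dots,L_i\}$ of each sliced index turns each of the $m_i$ tensors attached to index $i$ into a sliced subtensor $A^{(i,j)}_{s_i}\in V_{i,j}$ ($j=1,\dots,m_i$), and contracting the rest of the network (all tensors not attached to sliced indices, together with all non-sliced indices) is a multilinear map $\Phi:\prod_{i=1}^n\prod_{j=1}^{m_i}V_{i,j}\to W$ over an infinite field $\mathbb{F}$. The sliced partition for $(s_1,\dots,s_n)$ is $\sigma_{s_1\cdots s_n}=\Phi(A^{(1,1)}_{s_1},\dots,A^{(1,m_1)}_{s_1},\dots,A^{(n,1)}_{s_n},\dots,A^{(n,m_n)}_{s_n})$, and the desired output is $\sigma_{\mathrm{final}}=\sum_{s_1,\dots,s_n}\sigma_{s_1\cdots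 s_n}$; there are $N=\prod_i L_i$ sliced partitions. Computing model: a master distributes work to workers; each worker evaluates $\Phi$ once on one input from each $V_{i,j}$ (so it has the same computational cost as computing one sliced partition) and returns the result; up to $f$ workers may fail, and nothing is recovered from a failed worker. The $f$-resilient number of a scheme is the total number of workers required so that $\sigma_{\mathrm{final}}$ can be retrieved despite any $f$ worker failures. Naive replication (each of the $N$ sliced partitions computed by $f+1$ workers) has $f$-resilient number $N(f+1)$; the gain of a scheme is $N(f+1)$ minus its $f$-resilient number. *)

theory Defs
  imports Complex_Main "HOL-Library.FuncSet"
begin

text \<open>Indices are 0-based: sliced index i ranges over {0..<n}, the two tensors
attached to a 2-node index are j = 0, 1, and the value s of a sliced index ranges
over {0..<L}.  All spaces V_(i,j) are modelled by one vector space 'v over the field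
'a (scalar multiplication sV); the output space W is 'w (scalar multiplication sW).
An argument tuple of Phi is a function  nat => nat => 'v ; only the slots i < n,
j < 2 are meaningful.\<close>

definition slot_upd :: "(nat \<Rightarrow> nat \<Rightarrow> 'v) \<Rightarrow> nat \<Rightarrow> nat \<Rightarrow> 'v \<Rightarrow> (nat \<Rightarrow> nat \<Rightarrow> 'v)" where
  "slot_upd args i j u = args(i := (args i)(j := u))"

definition multilinear2 ::
  "('a::field \<Rightarrow> 'v::ab_group_add \<Rightarrow> 'v) \<Rightarrow> ('a \<Rightarrow> 'w::ab_group_add \<Rightarrow> 'w) \<Rightarrow> nat
    \<Rightarrow> ((nat \<Rightarrow> nat \<Rightarrow> 'v) \<Rightarrow> 'w) \<Rightarrow> bool" where
  "multilinear2 sV sW n \<Phi> \<longleftrightarrow>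
     (\<forall>i<n. \<forall>j<2. \<forall>args. Vector_Spaces.linear sV sW (\<lambda>u. \<Phi> (slot_upd args i j u)))"

definition sliced_args ::
  "nat \<Rightarrow> (nat \<Rightarrow> nat \<Rightarrow> nat \<Rightarrow> 'v::zero) \<Rightarrow> (nat \<Rightarrow> nat) \<Rightarrow> (nat \<Rightarrow> nat \<Rightarrow> 'v)" where
  "sliced_args n A s = (\<lambda>i j. if i < n \<and> j < 2 then A i j (s i) else 0)"

definition sigma_final ::
  "nat \<Rightarrow> nat \<Rightarrow> ((nat \<Rightarrow> nat \<Rightarrow> 'v::zero) \<Rightarrow> 'w::comm_monoid_add)
    \<Rightarrow> (nat \<Rightarrow> nat \<Rightarrow> nat \<Rightarrow> 'v) \<Rightarrow> 'w" where
  "sigma_final n L \<Phi> A = (\<Sum>s \<in> PiE {..<n} (\<lambda>_. {..<L}). \<Phi> (sliced_args n A s))"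

definition encode ::
  "('a::field \<Rightarrow> 'v::ab_group_add \<Rightarrow> 'v) \<Rightarrow> nat \<Rightarrow> nat
    \<Rightarrow> (nat \<Rightarrow> nat \<Rightarrow> nat \<Rightarrow> 'v) \<Rightarrow> 'a \<Rightarrow> (nat \<Rightarrow> nat \<Rightarrow> 'v)" where
  "encode sV n L A x = (\<lambda>i j.
     if i < n \<and> j = 0 then (\<Sum>s<L. sV (x ^ (s * L ^ i)) (A i 0 s))
     else if i < n \<and> j = 1 then (\<Sum>s<L. sV (x ^ ((L - 1 - s) * L ^ i)) (A i 1 s))
     else 0)"

text \<open>Gain of a scheme with f-resilient number R, compared with naive replication
of N sliced partitions (N (f+1) workers).\<close>
definition gain :: "nat \<Rightarrow> nat \<Rightarrow> nat \<Rightarrow> int" where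
  "gain N f R = int N * (int f + 1) - int R"

end

theory Submission imports Defs "HOL-Computational_Algebra.Polynomial" begin

lemma lagrange_coeffs:
  fixes x :: "nat \<Rightarrow> 'a::field"
  assumes fin: "finite S" and inj: "inj_on x S" and DS: "D < card S"
  shows "\<exists>c. \<forall>d < card S. (\<Sum>k\<in>S. c k * x k ^ d) = (if d = D then 1 else 0)"
proof -
  define l where "l k = smult (inverse (\<Prod>j\<in>S-{k}. x k - x j)) (\<Prod>j\<in>S-{k}. [:- x j, 1:])" for k
  have deg: "degree (l k) \<le> card S - 1" if "k \<in> S" for k
  proof -
    have "degree (\<Prod>j\<in>S-{k}. [:- x j, 1:]) \<le> (\<Sum>j\<in>S-{k}. degree [:- x j, (1::'a):])"
      using degree_prod_sum_le[of "S-{k}" "\<lambda>j. [:- x j, (1::'a):]"] fin by (simp add: o_def)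
    also have "\<dots> = card (S - {k})" by simp
    also have "\<dots> = card S - 1" using that fin by simp
    finally show ?thesis unfolding l_def using degree_smult_le order_trans by blast
  qed
  have pl: "poly (l k) (x m) = (if m = k then 1 else 0)" if "k \<in> S" "m \<in> S" for k m
  proof (cases "m = k")
    case True
    have "(\<Prod>j\<in>S-{k}. x k - x j) \<noteq> 0"
      using fin inj that by (auto simp: inj_on_def)
    then show ?thesis using True by (simp add: l_def poly_prod)
  next
    case False
    have "(\<Prod>j\<in>S-{k}. poly [:- x j, 1:] (x m)) = 0"
      using fin that False by (intro prod_zero) auto
    then show ?thesis using False by (simp add: l_def poly_prod)
  qed
  have key: "(\<Sum>k\<in>S. x k ^ d * coeff (l k) D) = (if d = D then 1 else 0)" if d: "d < card S" for d
  proof -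
    define q where "q = (\<Sum>k\<in>S. smult (x k ^ d) (l k)) - monom 1 d"
    have dq: "degree q \<le> card S - 1"
    proof -
      have d1: "degree (\<Sum>k\<in>S. smult (x k ^ d) (l k)) \<le> card S - 1"
      proof (rule degree_sum_le[OF fin])
        fix k assume "k \<in> S"
        then show "degree (smult (x k ^ d) (l k)) \<le> card S - 1"
          using deg[of k] degree_smult_le[of "x k ^ d" "l k"] by linarith
      qed
      have d2: "degree (monom (1::'a) d) \<le> card S - 1"
        using degree_monom_le[of "1::'a" d] d by linarith
      show ?thesis unfolding q_def by (rule degree_diff_le[OF d1 d2])
    qed
    have roots: "x ` S \<subseteq> {r. poly q r = 0}"
    proof
      fix r assume "r \<in> x ` S"
      then obtain m where m: "m \<in> S" "r = x m" by auto
      have "poly q r = (\<Sum>k\<in>S. x k ^ d * (if m = k then 1 else 0)) - x m ^ d"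
        using m pl by (simp add: q_def poly_sum poly_monom)
      also have "(\<Sum>k\<in>S. x k ^ d * (if m = k then 1 else 0)) = (\<Sum>k\<in>S. if m = k then x k ^ d else 0)"
        by (rule sum.cong) auto
      also have "\<dots> - x m ^ d = 0" using m fin by (simp add: sum.delta)
      finally show "r \<in> {r. poly q r = 0}" by simp
    qed
    have "q = 0"
    proof (rule ccontr)
      assume "q \<noteq> 0"
      hence "card (x ` S) \<le> card {r. poly q r = 0}"
        using roots poly_roots_finite card_mono by blast
      also have "\<dots> \<le> degree q" by (rule card_poly_roots_bound) fact
      finally show False using dq card_image[OF inj] DS by simp
    qed
    hence "coeff q D = 0" by simp
    then show ?thesis by (simp add: q_def coeff_sum)
  qed
  show ?thesis
    by (rule exI[of _ "\<lambda>k. coeff (l k) D"]) (use key in \<open>simp add: mult.commute\<close>)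
qed

lemma digits_unique:
  fixes u :: "nat \<Rightarrow> nat" assumes "L > 0" "\<forall>i<n. u i \<le> 2*(L-1)"
    "(\<Sum>i<n. u i * L^i) = (\<Sum>i<n. (L-1) * L^i)"
  shows "\<forall>i<n. u i = L - 1"
  using assms
proof (induction n arbitrary: u)
  case 0 then show ?case by simp
next
  case (Suc n)
  have e1: "(\<Sum>i<Suc n. u i * L^i) = u 0 + L * (\<Sum>i<n. u (Suc i) * L^i)"
  proof -
    have "(\<Sum>i<n. u (Suc i) * L^Suc i) = L * (\<Sum>i<n. u (Suc i) * L^i)"
      by (simp add: sum_distrib_left mult_ac)
    then show ?thesis by (simp only: sum.lessThan_Suc_shift) simp
  qed
  have e2: "(\<Sum>i<Suc n. (L-1) * L^i) = (L-1) + L * (\<Sum>i<n. (L-1) * L^i)"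
  proof -
    have "(\<Sum>i<n. (L-1) * L^Suc i) = L * (\<Sum>i<n. (L-1) * L^i)"
      by (simp add: sum_distrib_left mult_ac)
    then show ?thesis by (simp only: sum.lessThan_Suc_shift) simp
  qed
  have eq: "u 0 + L * (\<Sum>i<n. u (Suc i) * L^i) = (L-1) + L * (\<Sum>i<n. (L-1) * L^i)"
    using Suc.prems e1 e2 by simp
  hence "(u 0 + (\<Sum>i<n. u (Suc i) * L^i) * L) mod L = ((L-1) + (\<Sum>i<n. (L-1) * L^i) * L) mod L"
    by (simp add: mult.commute)
  hence "u 0 mod L = (L - 1) mod L" by (simp only: mod_mult_self1)
  hence m: "u 0 mod L = L - 1" using Suc.prems(1) by simp
  have b: "u 0 \<le> 2*(L-1)" using Suc.prems(2) by auto
  have u0: "u 0 = L - 1"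
  proof (cases "u 0 < L")
    case True then show ?thesis using m by simp
  next
    case False
    hence "(u 0 - L) mod L = L - 1" using m by (simp add: mod_if)
    moreover have "u 0 - L < L" using b Suc.prems(1) by linarith
    ultimately have "u 0 - L = L - 1" by simp
    then show ?thesis using b False by linarith
  qed
  have "(\<Sum>i<n. u (Suc i) * L^i) = (\<Sum>i<n. (L-1) * L^i)"
  proof -
    have "L * (\<Sum>i<n. u (Suc i) * L^i) = L * (\<Sum>i<n. (L-1) * L^i)"
      using eq u0 by linarith
    then show ?thesis using Suc.prems(1) by simp
  qed
  hence "\<forall>i<n. u (Suc i) = L - 1"
    using Suc.IH[of "\<lambda>i. u (Suc i)"] Suc.prems by auto
  then show ?case using u0 by (auto simp: less_Suc_eq_0_disj)
qed

lemma geom_nat: "L > 0 \<Longrightarrow> (\<Sum>i<n. (L-1) * L^i) = L^n - (1::nat)"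
proof (induction n)
  case 0 then show ?case by simp
next
  case (Suc n)
  have "L^n \<ge> 1" using Suc.prems by simp
  moreover have "(L-1)*L^n + L^n = L*L^n" using Suc.prems by (cases L) auto
  ultimately show ?case using Suc by simp
qed


definition fill :: "(nat \<Rightarrow> nat \<Rightarrow> 'v) \<Rightarrow> (nat \<times> nat) set \<Rightarrow> (nat \<Rightarrow> nat \<Rightarrow> 'v) \<Rightarrow> nat \<Rightarrow> nat \<Rightarrow> 'v" where
  "fill args P g = (\<lambda>i j. if (i,j) \<in> P then g i j else args i j)"

lemma sum_PiE_insert:
  assumes "p \<notin> P" "finite P" "finite S"
  shows "(\<Sum>t\<in>PiE (insert p P) (\<lambda>_. S). g t) = (\<Sum>t\<in>PiE P (\<lambda>_. S). \<Sum>s\<in>S. g (t(p := s)))"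
proof -
  have "(\<Sum>t\<in>PiE (insert p P) (\<lambda>_. S). g t) = (\<Sum>(s,t)\<in>S \<times> PiE P (\<lambda>_. S). g (t(p := s)))"
    unfolding PiE_insert_eq
    by (subst sum.reindex[OF inj_combinator[OF assms(1)]]) (simp add: case_prod_beta o_def)
  also have "\<dots> = (\<Sum>s\<in>S. \<Sum>t\<in>PiE P (\<lambda>_. S). g (t(p := s)))"
    by (simp add: sum.cartesian_product)
  also have "\<dots> = (\<Sum>t\<in>PiE P (\<lambda>_. S). \<Sum>s\<in>S. g (t(p := s)))"
    by (rule sum.swap)
  finally show ?thesis .
qed

lemma expand:
  fixes sV :: "'a::field \<Rightarrow> 'v::ab_group_add \<Rightarrow> 'v"
    and sW :: "'a \<Rightarrow> 'w::ab_group_add \<Rightarrow> 'w"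
  assumes VW: "vector_space sW"
    and lin: "\<And>args p. p \<in> Q \<Longrightarrow> Vector_Spaces.linear sV sW (\<lambda>u. \<Phi> (slot_upd args (fst p) (snd p) u))"
    and finP: "finite P" and PQ: "P \<subseteq> Q" and finS: "finite S"
  shows "\<Phi> (fill args P (\<lambda>i j. \<Sum>s\<in>S. sV (c (i,j) s) (a (i,j) s)))
       = (\<Sum>t\<in>PiE P (\<lambda>_. S). sW (\<Prod>p\<in>P. c p (t p)) (\<Phi> (fill args P (\<lambda>i j. a (i,j) (t (i,j))))))"
  using finP PQ
proof (induction P arbitrary: args rule: finite_induct)
  case empty
  interpret W: vector_space sW by fact
  have "fill args {} g = args" for g :: "nat \<Rightarrow> nat \<Rightarrow> 'v" by (simp add: fill_def)
  then show ?case by simp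
next
  case (insert p P)
  interpret W: vector_space sW by fact
  obtain p1 p2 where p: "p = (p1, p2)" by (cases p)
  define G where "G = (\<lambda>i j. \<Sum>s\<in>S. sV (c (i,j) s) (a (i,j) s))"
  define aT where "aT t = (\<lambda>i j. a (i,j) (t (i,j)))" for t
  have f1: "fill args (insert p P) h = fill (slot_upd args p1 p2 (h p1 p2)) P h" for h :: "nat \<Rightarrow> nat \<Rightarrow> 'v"
    by (auto simp: fill_def slot_upd_def p fun_eq_iff)
  have f2: "fill (slot_upd args p1 p2 v) P h = slot_upd (fill args P h) p1 p2 v" for v h
    using insert.hyps(2) by (auto simp: fill_def slot_upd_def p fun_eq_iff)
  have f3: "slot_upd (fill args P (aT t)) p1 p2 (a p s) = fill args (insert p P) (aT (t(p := s)))" for t s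
    using insert.hyps(2) by (auto simp: fill_def slot_upd_def p fun_eq_iff aT_def)
  have linp: "module_hom sV sW (\<lambda>u. \<Phi> (slot_upd X p1 p2 u))" for X
    using lin[of p X] insert.prems by (simp add: p linear_iff_module_hom)
  have f4: "\<Phi> (slot_upd X p1 p2 (G p1 p2)) = (\<Sum>s\<in>S. sW (c p s) (\<Phi> (slot_upd X p1 p2 (a p s))))" for X
    unfolding G_def p[symmetric] module_hom.sum[OF linp] module_hom.scale[OF linp] ..
  have f5: "(\<Prod>q\<in>insert p P. c q (if q = p then s else t q)) = (\<Prod>q\<in>P. c q (t q)) * c p s" for t s
  proof -
    have "(\<Prod>q\<in>P. c q (if q = p then s else t q)) = (\<Prod>q\<in>P. c q (t q))"
      using insert.hyps(2) by (intro prod.cong) auto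
    then show ?thesis using insert.hyps by (simp add: mult.commute)
  qed
  have "\<Phi> (fill args (insert p P) G) = \<Phi> (fill (slot_upd args p1 p2 (G p1 p2)) P G)"
    by (simp add: f1)
  also have "\<dots> = (\<Sum>t\<in>PiE P (\<lambda>_. S). sW (\<Prod>q\<in>P. c q (t q)) (\<Phi> (fill (slot_upd args p1 p2 (G p1 p2)) P (aT t))))"
    using insert.IH[of "slot_upd args p1 p2 (G p1 p2)"] insert.prems by (simp add: G_def aT_def)
  also have "\<dots> = (\<Sum>t\<in>PiE P (\<lambda>_. S). \<Sum>s\<in>S. sW (\<Prod>q\<in>insert p P. c q ((t(p := s)) q)) (\<Phi> (fill args (insert p P) (aT (t(p := s))))))"
    by (simp add: f2 f4 f3 f5 W.scale_sum_right)
  also have "\<dots> = (\<Sum>t\<in>PiE (insert p P) (\<lambda>_. S). sW (\<Prod>q\<in>insert p P. c q (t q)) (\<Phi> (fill args (insert p P) (aT t))))"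
    by (rule sum_PiE_insert[symmetric]) (use insert.hyps finS in auto)
  finally show ?case by (simp add: G_def aT_def)
qed


definition Sl :: "nat \<Rightarrow> (nat \<times> nat) set" where "Sl n = {..<n} \<times> {..<2}"
definition ex :: "nat \<Rightarrow> nat \<times> nat \<Rightarrow> nat \<Rightarrow> nat" where
  "ex L p s = (if snd p = 0 then s * L ^ fst p else (L - 1 - s) * L ^ fst p)"
definition Ex :: "nat \<Rightarrow> nat \<Rightarrow> (nat \<times> nat \<Rightarrow> nat) \<Rightarrow> nat" where
  "Ex n L t = (\<Sum>p\<in>Sl n. ex L p (t p))"
definition Zt :: "nat \<Rightarrow> (nat \<Rightarrow> nat \<Rightarrow> nat \<Rightarrow> 'v::zero) \<Rightarrow> (nat \<times> nat \<Rightarrow> nat) \<Rightarrow> nat \<Rightarrow> nat \<Rightarrow> 'v" where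
  "Zt n A t = (\<lambda>i j. if i < n \<and> j < 2 then A i j (t (i,j)) else 0)"

lemma sum_Sl: "(\<Sum>p\<in>Sl n. h p) = (\<Sum>i<n. h (i,0) + h (i,1))"
proof -
  have "(\<Sum>p\<in>Sl n. h p) = (\<Sum>i<n. \<Sum>j<2. h (i,j))"
    unfolding Sl_def by (simp add: sum.cartesian_product)
  also have "\<dots> = (\<Sum>i<n. h (i,0) + h (i,1))"
    by (simp add: numeral_2_eq_2)
  finally show ?thesis .
qed

lemma Ex_eq: "Ex n L t = (\<Sum>i<n. (t (i,0) + (L - 1 - t (i,1))) * L ^ i)"
  unfolding Ex_def sum_Sl by (simp add: ex_def add_mult_distrib)

lemma Ex_bound:
  assumes "t \<in> PiE (Sl n) (\<lambda>_. {..<L})" "L > 0"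
  shows "Ex n L t \<le> 2 * (L ^ n - 1)"
proof -
  have "Ex n L t \<le> (\<Sum>i<n. (2 * (L - 1)) * L ^ i)"
    unfolding Ex_eq
  proof (rule sum_mono, rule mult_right_mono)
    fix i assume "i \<in> {..<n}"
    hence "(i,0) \<in> Sl n" by (simp add: Sl_def)
    hence "t (i,0) < L" using assms(1) by (auto simp: PiE_iff)
    then show "t (i, 0) + (L - 1 - t (i, 1)) \<le> 2 * (L - 1)" by linarith
  qed simp
  also have "\<dots> = 2 * (\<Sum>i<n. (L - 1) * L ^ i)" by (simp add: sum_distrib_left mult.assoc)
  also have "\<dots> = 2 * (L ^ n - 1)" using geom_nat[OF assms(2)] by simp
  finally show ?thesis .
qed

lemma Ex_D:
  assumes "t \<in> PiE (Sl n) (\<lambda>_. {..<L})" "L > 0"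
  shows "Ex n L t = L ^ n - 1 \<longleftrightarrow> (\<forall>i<n. t (i,0) = t (i,1))"
proof -
  have lt: "t (i,j) < L" if "i < n" "j < 2" for i j
    using assms(1) that by (auto simp: PiE_iff Sl_def)
  show ?thesis
  proof
    assume "Ex n L t = L ^ n - 1"
    hence "(\<Sum>i<n. (t (i,0) + (L - 1 - t (i,1))) * L ^ i) = (\<Sum>i<n. (L - 1) * L ^ i)"
      using geom_nat[OF assms(2)] Ex_eq by simp
    moreover have "\<forall>i<n. t (i,0) + (L - 1 - t (i,1)) \<le> 2 * (L - 1)"
      using lt[of _ 0] by fastforce
    ultimately have "\<forall>i<n. t (i,0) + (L - 1 - t (i,1)) = L - 1"
      using digits_unique[OF assms(2), of n "\<lambda>i. t (i,0) + (L - 1 - t (i,1))"] by blast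
    then show "\<forall>i<n. t (i,0) = t (i,1)"
      using lt[of _ 1] by fastforce
  next
    assume a: "\<forall>i<n. t (i,0) = t (i,1)"
    have "Ex n L t = (\<Sum>i<n. (L - 1) * L ^ i)"
      unfolding Ex_eq
    proof (rule sum.cong)
      fix i assume "i \<in> {..<n}"
      then show "(t (i,0) + (L - 1 - t (i,1))) * L ^ i = (L - 1) * L ^ i"
        using a lt[of i 1] by simp
    qed simp
    then show "Ex n L t = L ^ n - 1" using geom_nat[OF assms(2)] by simp
  qed
qed

lemma expansion:
  fixes sV :: "'a::field \<Rightarrow> 'v::ab_group_add \<Rightarrow> 'v"
    and sW :: "'a \<Rightarrow> 'w::ab_group_add \<Rightarrow> 'w"
  assumes VW: "vector_space sW" and ml: "multilinear2 sV sW n \<Phi>"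
  shows "\<Phi> (encode sV n L A y) = (\<Sum>t\<in>PiE (Sl n) (\<lambda>_. {..<L}). sW (y ^ Ex n L t) (\<Phi> (Zt n A t)))"
proof -
  have enc: "encode sV n L A y = fill (\<lambda>_ _. 0) (Sl n) (\<lambda>i j. \<Sum>s\<in>{..<L}. sV (y ^ ex L (i,j) s) (A i j s))"
    by (auto simp: encode_def fill_def Sl_def ex_def fun_eq_iff less_2_cases_iff)
  have lin: "Vector_Spaces.linear sV sW (\<lambda>u. \<Phi> (slot_upd args (fst p) (snd p) u))" if "p \<in> Sl n" for args p
    using ml that unfolding multilinear2_def Sl_def by auto
  have "\<Phi> (encode sV n L A y) = (\<Sum>t\<in>PiE (Sl n) (\<lambda>_. {..<L}). sW (\<Prod>p\<in>Sl n. y ^ ex L p (t p))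
          (\<Phi> (fill (\<lambda>_ _. 0) (Sl n) (\<lambda>i j. A i j (t (i,j))))))"
    unfolding enc
    using expand[OF VW lin, where P="Sl n" and S="{..<L}" and args="\<lambda>_ _. 0" and c="\<lambda>p s. y ^ ex L p s" and a="\<lambda>p s. A (fst p) (snd p) s"]
    by (simp add: Sl_def)
  also have "\<dots> = (\<Sum>t\<in>PiE (Sl n) (\<lambda>_. {..<L}). sW (y ^ Ex n L t) (\<Phi> (Zt n A t)))"
  proof (rule sum.cong)
    fix t
    have "fill (\<lambda>_ _. 0) (Sl n) (\<lambda>i j. A i j (t (i,j))) = Zt n A t"
      by (auto simp: fill_def Zt_def Sl_def fun_eq_iff)
    then show "sW (\<Prod>p\<in>Sl n. y ^ ex L p (t p)) (\<Phi> (fill (\<lambda>_ _. 0) (Sl n) (\<lambda>i j. A i j (t (i,j))))) =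
          sW (y ^ Ex n L t) (\<Phi> (Zt n A t))"
      by (simp add: Ex_def power_sum)
  qed simp
  finally show ?thesis .
qed


theorem corollary1:
  fixes sV :: "'a::field \<Rightarrow> 'v::ab_group_add \<Rightarrow> 'v"
    and sW :: "'a \<Rightarrow> 'w::ab_group_add \<Rightarrow> 'w"
    and n L f :: nat
  assumes "infinite (UNIV :: 'a set)"
    and "vector_space sV" and "vector_space sW"
    and "L > 2"
  shows "(\<forall>x :: nat \<Rightarrow> 'a. inj_on x {..<f + 2 * L ^ n - 1} \<longrightarrow>
           (\<forall>F. F \<subseteq> {..<f + 2 * L ^ n - 1} \<and> card F \<le> f \<longrightarrow>
             (\<exists>dec :: (nat \<Rightarrow> 'w) \<Rightarrow> 'w.
               \<forall>(\<Phi> :: (nat \<Rightarrow> nat \<Rightarrow> 'v) \<Rightarrow> 'w) (A :: nat \<Rightarrow> nat \<Rightarrow> nat \<Rightarrow> 'v).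
                 multilinear2 sV sW n \<Phi> \<longrightarrow>
                 sigma_final n L \<Phi> A =
                   dec (\<lambda>k. if k \<in> {..<f + 2 * L ^ n - 1} - F
                             then \<Phi> (encode sV n L A (x k)) else 0))))
       \<and> gain (L ^ n) f (f + 2 * L ^ n - 1) = (int L ^ n - 1) * (int f - 1)"
proof -
  interpret W: vector_space sW by fact
  have L0: "L > 0" using assms(4) by simp
  have Ln: "L ^ n \<ge> 1" using L0 by simp
  define R where "R = f + 2 * L ^ n - 1"
  define D where "D = L ^ n - 1"
  define T where "T = PiE (Sl n) (\<lambda>_. {..<L})"
  have part2: "gain (L ^ n) f R = (int L ^ n - 1) * (int f - 1)"
  proof -
    have "int R = int f + 2 * int L ^ n - 1" using Ln unfolding R_def by (simp add: of_nat_diff)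
    then show ?thesis unfolding gain_def by (simp add: algebra_simps)
  qed
  have part1: "\<exists>dec :: (nat \<Rightarrow> 'w) \<Rightarrow> 'w.
               \<forall>(\<Phi> :: (nat \<Rightarrow> nat \<Rightarrow> 'v) \<Rightarrow> 'w) (A :: nat \<Rightarrow> nat \<Rightarrow> nat \<Rightarrow> 'v).
                 multilinear2 sV sW n \<Phi> \<longrightarrow>
                 sigma_final n L \<Phi> A =
                   dec (\<lambda>k. if k \<in> {..<R} - F then \<Phi> (encode sV n L A (x k)) else 0)"
    if inj: "inj_on x {..<R}" and F: "F \<subseteq> {..<R}" "card F \<le> f" for x F
  proof -
    have "card ({..<R} - F) = R - card F"
      using F by (simp add: card_Diff_subset finite_subset)
    hence "2 * L ^ n - 1 \<le> card ({..<R} - F)" using F(2) Ln unfolding R_def by simp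
    then obtain S where S: "S \<subseteq> {..<R} - F" "card S = 2 * L ^ n - 1" "finite S"
      by (rule obtain_subset_with_card_n)
    have injS: "inj_on x S" using inj_on_subset[OF inj] S(1) by blast
    have DS: "D < card S" using S(2) Ln unfolding D_def by simp
    obtain c where c: "\<forall>d<card S. (\<Sum>k\<in>S. c k * x k ^ d) = (if d = D then 1 else 0)"
      using lagrange_coeffs[OF S(3) injS DS] by blast
    show ?thesis
    proof (rule exI[of _ "\<lambda>v. \<Sum>k\<in>S. sW (c k) (v k)"], intro allI impI)
      fix \<Phi> :: "(nat \<Rightarrow> nat \<Rightarrow> 'v) \<Rightarrow> 'w" and A :: "nat \<Rightarrow> nat \<Rightarrow> nat \<Rightarrow> 'v"
      assume ml: "multilinear2 sV sW n \<Phi>"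
      have "(\<Sum>k\<in>S. sW (c k) (if k \<in> {..<R} - F then \<Phi> (encode sV n L A (x k)) else 0))
          = (\<Sum>k\<in>S. sW (c k) (\<Phi> (encode sV n L A (x k))))"
        using S(1) by (intro sum.cong) auto
      also have "\<dots> = (\<Sum>k\<in>S. sW (c k) (\<Sum>t\<in>T. sW (x k ^ Ex n L t) (\<Phi> (Zt n A t))))"
        unfolding T_def using expansion[OF assms(3) ml] by simp
      also have "\<dots> = (\<Sum>k\<in>S. \<Sum>t\<in>T. sW (c k * x k ^ Ex n L t) (\<Phi> (Zt n A t)))"
        by (simp add: W.scale_sum_right)
      also have "\<dots> = (\<Sum>t\<in>T. \<Sum>k\<in>S. sW (c k * x k ^ Ex n L t) (\<Phi> (Zt n A t)))"
        by (rule sum.swap)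
      also have "\<dots> = (\<Sum>t\<in>T. sW (\<Sum>k\<in>S. c k * x k ^ Ex n L t) (\<Phi> (Zt n A t)))"
        by (simp add: W.scale_sum_left)
      also have "\<dots> = (\<Sum>t\<in>T. if Ex n L t = D then \<Phi> (Zt n A t) else 0)"
      proof (rule sum.cong)
        fix t assume t: "t \<in> T"
        have "Ex n L t < card S" using Ex_bound[OF t[unfolded T_def] L0] S(2) Ln by simp
        then show "sW (\<Sum>k\<in>S. c k * x k ^ Ex n L t) (\<Phi> (Zt n A t)) = (if Ex n L t = D then \<Phi> (Zt n A t) else 0)"
          using c by simp
      qed simp
      also have "\<dots> = (\<Sum>t\<in>{t\<in>T. Ex n L t = D}. \<Phi> (Zt n A t))"
        by (rule sum.inter_filter[symmetric]) (simp add: T_def Sl_def finite_PiE)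
      also have "\<dots> = (\<Sum>s\<in>PiE {..<n} (\<lambda>_. {..<L}). \<Phi> (sliced_args n A s))"
      proof -
        define h where "h s = (\<lambda>p. if p \<in> Sl n then s (fst p) else undefined)" for s :: "nat \<Rightarrow> nat"
        define h' where "h' t = (\<lambda>i. if i < n then t (i, 0) else undefined)" for t :: "nat \<times> nat \<Rightarrow> nat"
        have hT: "h s \<in> T" if "s \<in> PiE {..<n} (\<lambda>_. {..<L})" for s
          using that by (auto simp: h_def T_def PiE_iff Sl_def extensional_def)
        have bij: "bij_betw h (PiE {..<n} (\<lambda>_. {..<L})) {t\<in>T. Ex n L t = D}"
        proof (rule bij_betw_byWitness[where f'=h'])
          show "\<forall>s\<in>PiE {..<n} (\<lambda>_. {..<L}). h' (h s) = s"
          proof (intro ballI ext)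
            fix s i assume s: "s \<in> PiE {..<n} (\<lambda>_. {..<L})"
            show "h' (h s) i = s i"
            proof (cases "i < n")
              case True then show ?thesis by (simp add: h_def h'_def Sl_def)
            next
              case False then show ?thesis using PiE_arb[OF s, of i] by (simp add: h'_def)
            qed
          qed
          show "\<forall>t\<in>{t\<in>T. Ex n L t = D}. h (h' t) = t"
          proof (intro ballI ext)
            fix t p assume tm: "t \<in> {t\<in>T. Ex n L t = D}"
            hence tT: "t \<in> T" and tE: "Ex n L t = L ^ n - 1" by (simp_all add: D_def)
            have t2: "\<forall>i<n. t (i,0) = t (i,1)"
              using Ex_D[OF tT[unfolded T_def] L0] tE by blast
            show "h (h' t) p = t p"
            proof (cases "p \<in> Sl n")
              case True
              then obtain i j where p: "p = (i,j)" "i < n" "j < 2" by (auto simp: Sl_def)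
              show ?thesis
              proof (cases "j = 0")
                case True then show ?thesis using p by (simp add: h_def h'_def Sl_def)
              next
                case False
                hence "j = 1" using p by simp
                then show ?thesis using p t2 by (simp add: h_def h'_def Sl_def)
              qed
            next
              case False
              then show ?thesis using PiE_arb[OF tT[unfolded T_def] False] by (simp add: h_def)
            qed
          qed
          show "h ` PiE {..<n} (\<lambda>_. {..<L}) \<subseteq> {t\<in>T. Ex n L t = D}"
          proof
            fix t assume "t \<in> h ` PiE {..<n} (\<lambda>_. {..<L})"
            then obtain s where s: "s \<in> PiE {..<n} (\<lambda>_. {..<L})" "t = h s" by blast
            have tT: "t \<in> T" using hT s by simp
            moreover have "\<forall>i<n. t (i,0) = t (i,1)" using s(2) by (simp add: h_def Sl_def)
            ultimately have "Ex n L t = L ^ n - 1" using Ex_D[OF tT[unfolded T_def] L0] by blast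
            then show "t \<in> {t\<in>T. Ex n L t = D}" using tT by (simp add: D_def)
          qed
          show "h' ` {t\<in>T. Ex n L t = D} \<subseteq> PiE {..<n} (\<lambda>_. {..<L})"
          proof
            fix s assume "s \<in> h' ` {t\<in>T. Ex n L t = D}"
            then obtain t where t: "t \<in> T" "s = h' t" by blast
            have "t (i,0) < L" if "i < n" for i
              using t(1) that unfolding T_def Sl_def by (auto simp: PiE_iff)
            then show "s \<in> PiE {..<n} (\<lambda>_. {..<L})"
              using t(2) by (auto simp: h'_def PiE_iff extensional_def)
          qed
        qed
        have "(\<Sum>s\<in>PiE {..<n} (\<lambda>_. {..<L}). \<Phi> (Zt n A (h s))) = (\<Sum>t\<in>{t\<in>T. Ex n L t = D}. \<Phi> (Zt n A t))"
          by (rule sum.reindex_bij_betw[OF bij])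
        moreover have "Zt n A (h s) = sliced_args n A s" for s
          by (auto simp: Zt_def h_def sliced_args_def Sl_def fun_eq_iff)
        ultimately show ?thesis by simp
      qed
      finally show "sigma_final n L \<Phi> A =
          (\<Sum>k\<in>S. sW (c k) (if k \<in> {..<R} - F then \<Phi> (encode sV n L A (x k)) else 0))"
        unfolding sigma_final_def by simp
    qed
  qed
  show ?thesis using part1 part2 unfolding R_def by blast
qed

end
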